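(* Let $\{x_k\}$, $\{\tilde x_k\}$ and $\{\xi_k\}$ be the sequences produced by Algorithm DFNDFL (described in the context) applied to $\min\{f(x): x\in X\cap\mathcal{Z}\}$, let $H=\{k:\xi_{k+1}<\xi_k\}$, and let $x^*\in X\cap\mathcal{Z}$ be any accumulation point of $\{x_k\}_{k\in H}$. Then $f(x^* )\le f(\bar x)$ for all $\bar x\in\mathcal{B}^z(x^* )$, where $\mathcal{B}^z(x^* )=\{x^*+d: d\in D^z(x^* )\}$.
   Context: Setting. $\{1,\dots,n\}=I^c\cup I^z$, $I^c\cap I^z=\emptyset$; for $v\in\mathbb{R}^n$, $v_c=(v_i)_{i\in I^c}$, $v_z=(v_i)_{i\in I^z}$. $l,u\in\mathbb{R}^n$ finite, $l_i<u_i$, $l_i,u_i\in\mathbb{Z}$ for $i\in I^z$; $X=\{x:l\le x\le u\}$; $\mathcal{Z}=\{x:x_i\in\mathbb{Z}\ \forall i\in I^z\}$; $[x]_{[l,u]}=\max\{l,\min\{u,x\}\}$ componentwise; $\|\cdot\|$ Euclidean. $f:\mathbb{R}^n\to\mathbb{R}$ is Lipschitz w.r.t. continuous variables: $\exists L>0$, $|f(x)-f(y)|\le L\|x-y\|$ whenever $x_z=y_z$. A vector in $\mathbb{Z}^p$ is primitive if the gcd of its components is 1. For $x\in X\cap\mathcal{Z}$: $D^z(x)=\{d\in\mathbb{Z}^n: d_i=0\ (i\in I^c),\ d_z \text{ primitive},\ x+d\in X\cap\mathcal{Z}\}$; $D^c(x)=\{s\in\mathbb{R}^n: s_i=0\ (i\in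 I^z),\ s_i\ge0 \text{ if } i\in I^c, x_i=l_i,\ s_i\le 0 \text{ if } i\in I^c, x_i=u_i\}$. Procedures (data $\gamma>0$, $\delta\in(0,1)$). PCS$(\tilde\alpha,w,p)$: set $\alpha=\tilde\alpha$; if $f([w+\alpha p]_{[l,u]})\le f(w)-\gamma\alpha^2$ set $\tilde p=p$, else if $f([w-\alpha p]_{[l,u]})\le f(w)-\gamma\alpha^2$ set $\tilde p=-p$, else return $(0,p)$; then repeat: $\beta=\alpha/\delta$; if $f([w+\beta\tilde p]_{[l,u]})>f(w)-\gamma\beta^2$ return $(\alpha,\tilde p)$, else $\alpha=\beta$. DS$(\tilde\alpha,w,p,\xi)$: let $\bar\alpha$ be the largest $\alpha\ge0$ with $w+\alpha p\in X\cap\mathcal{Z}$, set $\alpha=\min\{\bar\alpha,\tilde\alpha\}$; if not ($\alpha>0$ and $f(w+\alpha p)\le f(w)-\xi$) return $0$; otherwise, while $\alpha<\bar\alpha$ and $f(w+\min\{\bar\alpha,2\alpha\}p)\le f(w)-\xi$, set $\alpha=\min\{\bar\alpha,2\alpha\}$; then return $\alpha$. Algorithm DFNDFL. Data: $x_0\in X\cap\mathcal{Z}$, $\xi_0>0$, $\theta\in(0,1)$; a sequence $\{s_k\}$ with $s_k\in D^c(x_0)$, $\|s_k\|=1$; $\tilde\alpha^c_0=1$; a set $D_0\subset D^z(x_0)$ with $\tilde\alpha^{(d)}_0=1$ for $d\in D_0$; $D:=D_0$ (tentative steps $\tilde\alpha^{(d)}$ not updated in an iteration keep their value). For $k=0,1,\dots$: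 Phase 1: $(\alpha^c_k,\tilde s_k)=$PCS$(\tilde\alpha^c_k,x_k,s_k)$; if $\alpha^c_k=0$ set $\tilde\alpha^c_{k+1}=\theta\tilde\alpha^c_k$, $\tilde x_k=x_k$; else $\tilde\alpha^c_{k+1}=\alpha^c_k$, $\tilde x_k=[x_k+\alpha^c_k\tilde s_k]_{[l,u]}$. Phase 2.A: set $y^+=\tilde x_k$; while $D\ne\emptyset$ and $y^+=\tilde x_k$: choose $d\in D$, set $D=D\setminus\{d\}$, $y=y^+$, $\alpha=$DS$(\tilde\alpha^{(d)}_k,y,d,\xi_k)$; if $\alpha=0$ set $y^+=y$, $\tilde\alpha^{(d)}_{k+1}=\max\{1,\lfloor\tilde\alpha^{(d)}_k/2\rfloor\}$; else $y^+=y+\alpha d$, $\tilde\alpha^{(d)}_{k+1}=\alpha$. Phase 2.B: if $y^+=\tilde x_k$ and the Discrete Search failed (returned $0$) with $\tilde\alpha^{(d)}_k=1$ for all $d\in D_k$, then set $\xi_{k+1}=\theta\xi_k$ and: if $D_k\supseteq D^z(\tilde x_k)$ set $D_{k+1}=D_k$; otherwise generate $D_{k+1}$ with $D_{k+1}\subseteq D^z(\tilde x_k)$, $D_{k+1}\supset D_k$ (strictly), and set $\tilde\alpha^{(d)}_{k+1}=1$ for $d\in D_{k+1}\setminus D_k$. Otherwise set $D_{k+1}=D_k$ and $\xi_{k+1}=\xi_k$. In all cases set $D=D_{k+1}$. Phase 3: choose any $x_{k+1}\in X\cap\mathcal{Z}$ with $f(x_{k+1})\le f(y^+)$. *)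

theory Defs
  imports "HOL-Analysis.Analysis"
begin

text \<open>Vectors live in real^'n; the index set of integer variables is Iz,
  the continuous ones are its complement.\<close>

definition proj :: "real^'n \<Rightarrow> real^'n \<Rightarrow> real^'n \<Rightarrow> real^'n" where
  "proj l u x = (\<chi> i. max (l$i) (min (u$i) (x$i)))"

definition boxX :: "real^'n \<Rightarrow> real^'n \<Rightarrow> (real^'n) set" where
  "boxX l u = {x. \<forall>i. l$i \<le> x$i \<and> x$i \<le> u$i}"

definition intZ :: "'n set \<Rightarrow> (real^'n) set" where
  "intZ Iz = {x. \<forall>i\<in>Iz. x$i \<in> \<int>}"

definition primitive_on :: "'n set \<Rightarrow> real^'n \<Rightarrow> bool" where
  "primitive_on Iz d \<longleftrightarrow> (\<forall>i\<in>Iz. d$i \<in> \<int>) \<and> Gcd ((\<lambda>i. \<lfloor>d$i\<rfloor>) ` Iz) = (1::int)"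

definition Dz :: "'n set \<Rightarrow> real^'n \<Rightarrow> real^'n \<Rightarrow> real^'n \<Rightarrow> (real^'n) set" where
  "Dz Iz l u x = {d. (\<forall>i. i \<notin> Iz \<longrightarrow> d$i = 0) \<and> primitive_on Iz d
                     \<and> x + d \<in> boxX l u \<inter> intZ Iz}"

definition Dc :: "'n set \<Rightarrow> real^'n \<Rightarrow> real^'n \<Rightarrow> real^'n \<Rightarrow> (real^'n) set" where
  "Dc Iz l u x = {s. (\<forall>i\<in>Iz. s$i = 0)
                     \<and> (\<forall>i. i \<notin> Iz \<longrightarrow> x$i = l$i \<longrightarrow> s$i \<ge> 0)
                     \<and> (\<forall>i. i \<notin> Iz \<longrightarrow> x$i = u$i \<longrightarrow> s$i \<le> 0)}"

text \<open>Projected Continuous Search PCS(alpha~, w, p).  The expansion loop returns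
  alpha~/delta^j for the least j such that the sufficient decrease test fails ta
  alpha~/delta^(j+1).\<close>
definition PCS :: "(real^'n \<Rightarrow> real) \<Rightarrow> real^'n \<Rightarrow> real^'n \<Rightarrow> real \<Rightarrow> real
                  \<Rightarrow> real \<Rightarrow> real^'n \<Rightarrow> real^'n \<Rightarrow> real \<times> (real^'n)" where
  "PCS f l u \<gamma> \<delta> ta w p =
    (let suff = (\<lambda>\<beta> q. f (proj l u (w + \<beta> *\<^sub>R q)) \<le> f w - \<gamma> * \<beta>\<^sup>2);
         grow = (\<lambda>q. (ta / \<delta> ^ (LEAST j. \<not> suff (ta / \<delta> ^ Suc j) q), q))
     in if suff ta p then grow p
        else if suff ta (-p) then grow (-p)
        else (0, p))"

text \<open>Discrete Search DS(alpha~, w, p, xi).  The doubling loop visits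
  a_j = min(alpha_bar, 2^j a_0) and stops at the first j where the loop guard fails.\<close>
definition DS :: "(real^'n \<Rightarrow> real) \<Rightarrow> 'n set \<Rightarrow> real^'n \<Rightarrow> real^'n \<Rightarrow> real
                  \<Rightarrow> real^'n \<Rightarrow> real^'n \<Rightarrow> real \<Rightarrow> real" where
  "DS f Iz l u ta w p \<xi> =
    (let abar = Sup {a. 0 \<le> a \<and> w + a *\<^sub>R p \<in> boxX l u \<inter> intZ Iz};
         a0 = min abar ta;
         a = (\<lambda>j::nat. min abar (2 ^ j * a0))
     in if \<not> (a0 > 0 \<and> f (w + a0 *\<^sub>R p) \<le> f w - \<xi>) then 0
        else a (LEAST j. \<not> (a j < abar \<and> f (w + a (Suc j) *\<^sub>R p) \<le> f w - \<xi>)))"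

text \<open>A run of Algorithm DFNDFL.  x = x_k, xt = x~_k, xi = xi_k, ac = alpha~^c_k,
  Dk = D_k, ta k d = alpha~^(d)_k, yp = y^+ at the end of Phase 2.A of iteration k.
  In Phase 2.A the directions are tried in the order given by a list ds of distinct
  elements of D_k; the loop stops at the first successful one or when D_k is exhausted.\<close>
definition dfndfl_run ::
  "(real^'n \<Rightarrow> real) \<Rightarrow> 'n set \<Rightarrow> real^'n \<Rightarrow> real^'n \<Rightarrow> real \<Rightarrow> real \<Rightarrow> real
   \<Rightarrow> (nat \<Rightarrow> real^'n) \<Rightarrow> (nat \<Rightarrow> real^'n) \<Rightarrow> (nat \<Rightarrow> real^'n) \<Rightarrow> (nat \<Rightarrow> real)
   \<Rightarrow> (nat \<Rightarrow> real) \<Rightarrow> (nat \<Rightarrow> (real^'n) set) \<Rightarrow> (nat \<Rightarrow> real^'n \<Rightarrow> real)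
   \<Rightarrow> (nat \<Rightarrow> real^'n) \<Rightarrow> bool" where
  "dfndfl_run f Iz l u \<gamma> \<delta> \<theta> s x xt xi ac Dk ta yp \<longleftrightarrow>
     \<gamma> > 0 \<and> 0 < \<delta> \<and> \<delta> < 1 \<and> 0 < \<theta> \<and> \<theta> < 1 \<and> xi 0 > 0
   \<and> x 0 \<in> boxX l u \<inter> intZ Iz
   \<and> (\<forall>k. s k \<in> Dc Iz l u (x 0) \<and> norm (s k) = 1)
   \<and> ac 0 = 1 \<and> Dk 0 \<subseteq> Dz Iz l u (x 0) \<and> (\<forall>d\<in>Dk 0. ta 0 d = 1)
   \<and> (\<forall>k.
       \<comment> \<open>Phase 1\<close>
       (let (a, st) = PCS f l u \<gamma> \<delta> (ac k) (x k) (s k) in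
          (a = 0 \<longrightarrow> ac (Suc k) = \<theta> * ac k \<and> xt k = x k)
        \<and> (a \<noteq> 0 \<longrightarrow> ac (Suc k) = a \<and> xt k = proj l u (x k + a *\<^sub>R st)))
       \<comment> \<open>Phase 2.A\<close>
     \<and> (\<exists>ds. distinct ds \<and> set ds \<subseteq> Dk k \<and>
          (let r = (\<lambda>d. DS f Iz l u (ta k d) (xt k) d (xi k)) in
             (\<forall>j. j + 1 < length ds \<longrightarrow> r (ds ! j) = 0)
           \<and> ((ds \<noteq> [] \<and> r (last ds) \<noteq> 0 \<and> yp k = xt k + r (last ds) *\<^sub>R last ds)
              \<or> (set ds = Dk k \<and> (\<forall>d\<in>set ds. r d = 0) \<and> yp k = xt k))
           \<and> (\<forall>d. ta (Suc k) d =
                 (if d \<in> set ds then (if r d = 0 then max 1 (of_int \<lfloor>ta k d / 2\<rfloor>) else r d)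
                  else if d \<in> Dk (Suc k) - Dk k then 1 else ta k d))))
       \<comment> \<open>Phase 2.B\<close>
     \<and> (let cond = (yp k = xt k \<and> (\<forall>d\<in>Dk k. ta k d = 1)) in
          (cond \<longrightarrow> xi (Suc k) = \<theta> * xi k
                   \<and> (Dz Iz l u (xt k) \<subseteq> Dk k \<longrightarrow> Dk (Suc k) = Dk k)
                   \<and> (\<not> Dz Iz l u (xt k) \<subseteq> Dk k \<longrightarrow>
                         Dk k \<subset> Dk (Suc k) \<and> Dk (Suc k) \<subseteq> Dz Iz l u (xt k)))
        \<and> (\<not> cond \<longrightarrow> xi (Suc k) = xi k \<and> Dk (Suc k) = Dk k))
       \<comment> \<open>Phase 3\<close>
     \<and> x (Suc k) \<in> boxX l u \<inter> intZ Iz \<and> f (x (Suc k)) \<le> f (yp k))"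

end

theory Submission
  imports Defs
begin


lemma DS_dec:
  assumes ne: "DS f Iz l u ta w p \<xi> \<noteq> 0"
  shows "f (w + DS f Iz l u ta w p \<xi> *\<^sub>R p) \<le> f w - \<xi>"
proof -
  define abar where "abar = Sup {a. 0 \<le> a \<and> w + a *\<^sub>R p \<in> boxX l u \<inter> intZ Iz}"
  define a0 where "a0 = min abar ta"
  define a where "a = (\<lambda>j::nat. min abar (2 ^ j * a0))"
  define P where "P = (\<lambda>j. \<not> (a j < abar \<and> f (w + a (Suc j) *\<^sub>R p) \<le> f w - \<xi>))"
  have DSe: "DS f Iz l u ta w p \<xi> = (if \<not> (a0 > 0 \<and> f (w + a0 *\<^sub>R p) \<le> f w - \<xi>) then 0 else a (LEAST j. P j))"
    unfolding DS_def Let_def abar_def a0_def a_def P_def by simp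
  have c: "a0 > 0" "f (w + a0 *\<^sub>R p) \<le> f w - \<xi>" using ne DSe by (auto split: if_splits)
  have DSv: "DS f Iz l u ta w p \<xi> = a (LEAST j. P j)" using DSe c by simp
  obtain n where n: "abar / a0 < 2 ^ n" using real_arch_pow[of 2 "abar / a0"] by auto
  have "abar < 2 ^ n * a0" using n c(1) by (simp add: field_simps)
  then have "P n" unfolding P_def a_def by simp
  then have PL: "P (LEAST j. P j)" by (rule LeastI)
  show ?thesis
  proof (cases "(LEAST j. P j)")
    case 0
    have "a 0 = a0" unfolding a_def a0_def by simp
    then show ?thesis using DSv 0 c by simp
  next
    case (Suc m)
    have "\<not> P m" using not_less_Least[of m P] Suc by simp
    then show ?thesis using DSv Suc unfolding P_def by simp
  qed
qed

lemma DS_fail: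
  assumes z: "DS f Iz l u 1 w d \<xi> = 0"
    and mem: "w + d \<in> boxX l u \<inter> intZ Iz"
    and bdd: "bdd_above {a. 0 \<le> a \<and> w + a *\<^sub>R d \<in> boxX l u \<inter> intZ Iz}"
  shows "f (w + d) > f w - \<xi>"
proof (rule ccontr)
  assume nc: "\<not> f (w + d) > f w - \<xi>"
  define abar where "abar = Sup {a. 0 \<le> a \<and> w + a *\<^sub>R d \<in> boxX l u \<inter> intZ Iz}"
  have ab: "abar \<ge> 1" unfolding abar_def
    by (rule cSup_upper) (use mem bdd in auto)
  define a0 where "a0 = min abar 1"
  have a0: "a0 = 1" using ab unfolding a0_def by simp
  define a where "a = (\<lambda>j::nat. min abar (2 ^ j * a0))"
  define P where "P = (\<lambda>j. \<not> (a j < abar \<and> f (w + a (Suc j) *\<^sub>R d) \<le> f w - \<xi>))"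
  have DSe: "DS f Iz l u 1 w d \<xi> = (if \<not> (a0 > 0 \<and> f (w + a0 *\<^sub>R d) \<le> f w - \<xi>) then 0 else a (LEAST j. P j))"
    unfolding DS_def Let_def abar_def a0_def a_def P_def by simp
  have "a (LEAST j. P j) \<ge> 1" unfolding a_def using ab a0
    by (simp add: a0)
  then show False using DSe z a0 nc by simp
qed



lemma grow_ok:
  fixes g :: "real \<Rightarrow> real"
  assumes ta: "ta > 0" and d: "0 < \<delta>" "\<delta> < 1" and g: "\<gamma> > 0"
    and s0: "g ta \<le> c - \<gamma> * ta\<^sup>2"
    and bnd: "\<forall>\<beta>. g \<beta> \<ge> B"
  shows "g (ta / \<delta> ^ (LEAST j. \<not> g (ta / \<delta> ^ Suc j) \<le> c - \<gamma> * (ta / \<delta> ^ Suc j)\<^sup>2))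
          \<le> c - \<gamma> * (ta / \<delta> ^ (LEAST j. \<not> g (ta / \<delta> ^ Suc j) \<le> c - \<gamma> * (ta / \<delta> ^ Suc j)\<^sup>2))\<^sup>2
        \<and> ta / \<delta> ^ (LEAST j. \<not> g (ta / \<delta> ^ Suc j) \<le> c - \<gamma> * (ta / \<delta> ^ Suc j)\<^sup>2) > 0"
proof -
  define P where "P = (\<lambda>j::nat. \<not> g (ta / \<delta> ^ Suc j) \<le> c - \<gamma> * (ta / \<delta> ^ Suc j)\<^sup>2)"
  define K where "K = max 1 (\<bar>c - B\<bar> / \<gamma>)"
  have "1 < 1 / \<delta>" using d by simp
  then obtain n where n: "K / ta < (1 / \<delta>) ^ n" using real_arch_pow by blast
  define \<beta> where "\<beta> = ta / \<delta> ^ Suc n"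
  have "ta / \<delta> ^ n \<le> \<beta>" unfolding \<beta>_def using d ta
    by (simp add: field_simps mult_left_le_one_le)
  moreover have "K < ta / \<delta> ^ n" using n ta d by (simp add: field_simps power_one_over)
  ultimately have bK: "K < \<beta>" by simp
  have "1 \<le> K" "\<bar>c - B\<bar> / \<gamma> \<le> K" unfolding K_def by auto
  then have b1: "\<beta> \<ge> 1" and b2: "\<bar>c - B\<bar> < \<gamma> * \<beta>" using bK g by (auto simp: field_simps intro: le_less_trans mult_strict_right_mono)
  have "\<gamma> * \<beta> \<le> \<gamma> * \<beta>\<^sup>2" using b1 g by (simp add: power2_eq_square)
  then have "c - \<gamma> * \<beta>\<^sup>2 < B" using b2 by linarith
  then have "P n" unfolding P_def \<beta>_def[symmetric] using bnd by (meson not_le order_trans)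
  then have PL: "P (LEAST j. P j)" by (rule LeastI)
  have pos: "ta / \<delta> ^ (LEAST j. P j) > 0" using ta d by simp
  have "g (ta / \<delta> ^ (LEAST j. P j)) \<le> c - \<gamma> * (ta / \<delta> ^ (LEAST j. P j))\<^sup>2"
  proof (cases "(LEAST j. P j)")
    case 0 then show ?thesis using s0 by simp
  next
    case (Suc m)
    have "\<not> P m" using not_less_Least[of m P] Suc by simp
    then show ?thesis using Suc unfolding P_def by simp
  qed
  then show ?thesis using pos unfolding P_def by simp
qed

lemma PCS_prop:
  assumes eq: "PCS f l u \<gamma> \<delta> ta w p = (a, q)" and ta: "ta > 0" and d: "0 < \<delta>" "\<delta> < 1" and g: "\<gamma> > 0"
    and bnd: "\<forall>\<beta>. f (proj l u (w + \<beta> *\<^sub>R p)) \<ge> B" "\<forall>\<beta>. f (proj l u (w + \<beta> *\<^sub>R (-p))) \<ge> B"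
  shows "a = 0 \<or> (a > 0 \<and> (q = p \<or> q = -p) \<and> f (proj l u (w + a *\<^sub>R q)) \<le> f w - \<gamma> * a\<^sup>2)"
proof -
  define suff where "suff = (\<lambda>\<beta> q. f (proj l u (w + \<beta> *\<^sub>R q)) \<le> f w - \<gamma> * \<beta>\<^sup>2)"
  define grow where "grow = (\<lambda>q. (ta / \<delta> ^ (LEAST j. \<not> suff (ta / \<delta> ^ Suc j) q), q))"
  have P: "PCS f l u \<gamma> \<delta> ta w p = (if suff ta p then grow p else if suff ta (-p) then grow (-p) else (0, p))"
    unfolding PCS_def Let_def suff_def grow_def by simp
  have G: "fst (grow q') > 0 \<and> suff (fst (grow q')) q'" if "suff ta q'" "\<forall>\<beta>. f (proj l u (w + \<beta> *\<^sub>R q')) \<ge> B" for q'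
    using grow_ok[of ta \<delta> \<gamma> "\<lambda>\<beta>. f (proj l u (w + \<beta> *\<^sub>R q'))" "f w" B] that ta d g
    unfolding grow_def suff_def by simp
  show ?thesis
  proof (cases "suff ta p")
    case True
    then have "(a, q) = grow p" using P eq by simp
    then show ?thesis using G[OF True bnd(1)] unfolding grow_def suff_def by auto
  next
    case F: False
    show ?thesis
    proof (cases "suff ta (-p)")
      case True
      then have "(a, q) = grow (-p)" using P eq F by simp
      then show ?thesis using G[OF True bnd(2)] unfolding grow_def suff_def by auto
    next
      case False
      then show ?thesis using P eq F by simp
    qed
  qed
qed



lemma proj_box: "\<forall>i. l$i < u$i \<Longrightarrow> proj l u y \<in> boxX l u"
  unfolding proj_def boxX_def by (auto simp: less_imp_le)

lemma proj_comp: "(proj l u y)$i = max (l$i) (min (u$i) (y$i))"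
  unfolding proj_def by simp

lemma proj_fix: "w \<in> boxX l u \<Longrightarrow> q$i = 0 \<Longrightarrow> (proj l u (w + b *\<^sub>R q))$i = w$i"
  unfolding proj_def boxX_def by auto

lemma pc: "(l::real) \<le> w \<Longrightarrow> w \<le> u \<Longrightarrow> \<bar>max l (min u y) - w\<bar> \<le> \<bar>y - w\<bar> \<and> \<bar>max l (min u y) - w\<bar> \<le> u - l"
  by (auto simp: max_def min_def abs_if)

lemma proj_dist: "w \<in> boxX l u \<Longrightarrow> norm (proj l u y - w) \<le> norm (y - w)"
  by (rule norm_le_componentwise_cart) (auto simp: proj_def boxX_def pc)

lemma proj_dist2: "w \<in> boxX l u \<Longrightarrow> norm (proj l u y - w) \<le> (\<Sum>i\<in>UNIV. u$i - l$i)"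
proof -
  assume w: "w \<in> boxX l u"
  have "norm (proj l u y - w) \<le> (\<Sum>i\<in>UNIV. \<bar>(proj l u y - w)$i\<bar>)" by (rule norm_le_l1_cart)
  also have "\<dots> \<le> (\<Sum>i\<in>UNIV. u$i - l$i)"
    by (rule sum_mono) (use w in \<open>auto simp: proj_def boxX_def pc\<close>)
  finally show ?thesis .
qed

lemma Dz_nonzero: "d \<in> Dz Iz l u w \<Longrightarrow> d \<noteq> 0"
  unfolding Dz_def primitive_on_def by (auto simp: image_constant_conv split: if_splits)

lemma bdd_dir:
  assumes w: "w \<in> boxX l u" and d: "d \<noteq> 0"
  shows "bdd_above {a. 0 \<le> a \<and> w + a *\<^sub>R d \<in> boxX l u \<inter> intZ Iz}"
proof -
  obtain i where i: "d$i \<noteq> 0" using d by (metis vec_eq_iff zero_index)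
  show ?thesis unfolding bdd_above_def
  proof (intro exI ballI)
    fix a assume "a \<in> {a. 0 \<le> a \<and> w + a *\<^sub>R d \<in> boxX l u \<inter> intZ Iz}"
    then have a: "0 \<le> a" "l$i \<le> w$i + a * d$i" "w$i + a * d$i \<le> u$i" unfolding boxX_def by auto
    have "l$i \<le> w$i" "w$i \<le> u$i" using w unfolding boxX_def by auto
    then have "a * \<bar>d$i\<bar> \<le> u$i - l$i" using a
      by (cases "d$i \<ge> 0") (auto simp: abs_if)
    then show "a \<le> (u$i - l$i) / \<bar>d$i\<bar>" using i by (simp add: field_simps)
  qed
qed

lemma chain_const:
  assumes fin: "finite F" and sub: "\<And>k. A k \<subseteq> F" and inc: "\<And>k. A k \<subseteq> A (Suc k)"
  shows "\<exists>K. \<forall>k\<ge>K. A k = A K"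
proof -
  have mono: "A m \<subseteq> A n" if "m \<le> n" for m n
    using lift_Suc_mono_le[of A, OF inc that] .
  have rfin: "finite (range (\<lambda>k. card (A k)))"
    by (rule finite_subset[of _ "{..card F}"]) (use card_mono[OF fin sub] in auto)
  define m where "m = Max (range (\<lambda>k. card (A k)))"
  have "m \<in> range (\<lambda>k. card (A k))" unfolding m_def using rfin by (intro Max_in) auto
  then obtain K where K: "card (A K) = m" by auto
  have "A k = A K" if "k \<ge> K" for k
  proof -
    have "card (A k) \<le> m" unfolding m_def using rfin by (intro Max_ge) auto
    then show ?thesis using mono[OF that] card_subset_eq[OF finite_subset[OF sub fin] mono[OF that]] K
      by (metis card_mono finite_subset fin sub le_antisym)
  qed
  then show ?thesis by blast
qed

lemma int_eventually_eq:
  fixes g :: "nat \<Rightarrow> real^'n"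
  assumes g: "g \<longlonglongrightarrow> y" and gi: "\<And>j. g j \<in> intZ Iz" and yi: "y \<in> intZ Iz"
  shows "eventually (\<lambda>j. \<forall>i\<in>Iz. g j $ i = y $ i) sequentially"
proof (rule eventually_ball_finite)
  show "finite Iz" by simp
  show "\<forall>i\<in>Iz. eventually (\<lambda>j. g j $ i = y $ i) sequentially"
  proof
    fix i assume i: "i \<in> Iz"
    have "(\<lambda>j. g j $ i) \<longlonglongrightarrow> y $ i" using g by (rule tendsto_vec_nth)
    then have "eventually (\<lambda>j. dist (g j $ i) (y $ i) < 1) sequentially"
      by (rule tendstoD) simp
    then show "eventually (\<lambda>j. g j $ i = y $ i) sequentially"
    proof (rule eventually_mono)
      fix j assume "dist (g j $ i) (y $ i) < 1"
      moreover have "g j $ i - y $ i \<in> \<int>" using gi yi i unfolding intZ_def by auto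
      ultimately show "g j $ i = y $ i" using Ints_nonzero_abs_less1[of "g j $ i - y $ i"]
        by (auto simp: dist_real_def)
    qed
  qed
qed

lemma lip_conv:
  fixes g :: "nat \<Rightarrow> real^'n"
  assumes L: "\<forall>y z. (\<forall>i\<in>Iz. y$i = z$i) \<longrightarrow> \<bar>f y - f z\<bar> \<le> L * norm (y - z)"
    and g: "g \<longlonglongrightarrow> y" and ev: "eventually (\<lambda>j. \<forall>i\<in>Iz. g j $ i = y $ i) sequentially"
  shows "(\<lambda>j. f (g j)) \<longlonglongrightarrow> f y"
proof -
  have "(\<lambda>j. f (g j) - f y) \<longlonglongrightarrow> 0"
  proof (rule Lim_null_comparison)
    show "eventually (\<lambda>j. norm (f (g j) - f y) \<le> L * norm (g j - y)) sequentially"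
      using ev by eventually_elim (use L in auto)
    have "(\<lambda>j. norm (g j - y)) \<longlonglongrightarrow> 0" using g by (simp add: LIM_zero tendsto_norm_zero)
    then show "(\<lambda>j. L * norm (g j - y)) \<longlonglongrightarrow> 0" by (auto intro: tendsto_mult_right_zero)
  qed
  then show ?thesis by (rule LIM_zero_cancel)
qed



lemma finite_F:
  "finite {d::real^'n. d \<noteq> 0 \<and> (\<forall>i. d$i \<in> {m::real. m \<in> \<int> \<and> \<bar>m\<bar> \<le> M})}"
proof -
  define S where "S = {m::real. m \<in> \<int> \<and> \<bar>m\<bar> \<le> M}"
  have "S \<subseteq> of_int ` {-\<lceil>M\<rceil>..\<lceil>M\<rceil>}"
  proof
    fix m assume "m \<in> S"
    then obtain z where z: "m = of_int z" "\<bar>m\<bar> \<le> M" unfolding S_def by (auto elim: Ints_cases)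
    then have "\<bar>z\<bar> \<le> \<lceil>M\<rceil>" by (metis ceiling_mono ceiling_of_int of_int_abs)
    then have "z \<in> {-\<lceil>M\<rceil>..\<lceil>M\<rceil>}" by auto
    then show "m \<in> of_int ` {-\<lceil>M\<rceil>..\<lceil>M\<rceil>}" using z by auto
  qed
  then have fS: "finite S" by (rule finite_subset) simp
  have "{d::real^'n. d \<noteq> 0 \<and> (\<forall>i. d$i \<in> S)} \<subseteq> vec_lambda ` (PiE UNIV (\<lambda>_. S))"
  proof
    fix d :: "real^'n" assume "d \<in> {d. d \<noteq> 0 \<and> (\<forall>i. d$i \<in> S)}"
    then show "d \<in> vec_lambda ` (PiE UNIV (\<lambda>_. S))"
      by (intro rev_image_eqI[of "vec_nth d"]) auto
  qed
  moreover have "finite (vec_lambda ` (PiE UNIV (\<lambda>_. S)))"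
    using fS by (intro finite_imageI finite_PiE) auto
  ultimately show ?thesis unfolding S_def by (rule finite_subset)
qed

lemma Dz_sub_F:
  assumes w: "w \<in> boxX l u"
  shows "Dz Iz l u w \<subseteq> {d::real^'n. d \<noteq> 0 \<and> (\<forall>i. d$i \<in> {m::real. m \<in> \<int> \<and> \<bar>m\<bar> \<le> (\<Sum>i\<in>UNIV. u$i - l$i)})}"
proof
  fix d assume d: "d \<in> Dz Iz l u w"
  have "d $ i \<in> {m::real. m \<in> \<int> \<and> \<bar>m\<bar> \<le> (\<Sum>i\<in>UNIV. u$i - l$i)}" for i
  proof (cases "i \<in> Iz")
    case True
    have "l$i \<le> w$i" "w$i \<le> u$i" "l$i \<le> w$i + d$i" "w$i + d$i \<le> u$i"
      using w d unfolding boxX_def Dz_def by auto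
    then have "\<bar>d$i\<bar> \<le> u$i - l$i" by auto
    also have "\<dots> \<le> (\<Sum>i\<in>UNIV. u$i - l$i)"
      by (rule member_le_sum) (use w in \<open>auto simp: boxX_def intro: order_trans\<close>)
    finally show ?thesis using d True unfolding Dz_def primitive_on_def by auto
  next
    case False
    have "0 \<le> (\<Sum>i\<in>UNIV. u$i - l$i)" 
      by (rule sum_nonneg) (use w in \<open>auto simp: boxX_def intro: order_trans\<close>)
    then show ?thesis using d False unfolding Dz_def by auto
  qed
  then show "d \<in> {d::real^'n. d \<noteq> 0 \<and> (\<forall>i. d$i \<in> {m::real. m \<in> \<int> \<and> \<bar>m\<bar> \<le> (\<Sum>i\<in>UNIV. u$i - l$i)})}"
    using Dz_nonzero[OF d] by auto
qed



theorem mainTheorem4: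
  fixes f :: "real^'n \<Rightarrow> real" and Iz :: "'n set" and l u :: "real^'n"
    and \<gamma> \<delta> \<theta> :: real
    and s x xt yp :: "nat \<Rightarrow> real^'n" and xi ac :: "nat \<Rightarrow> real"
    and Dk :: "nat \<Rightarrow> (real^'n) set" and ta :: "nat \<Rightarrow> real^'n \<Rightarrow> real"
    and r :: "nat \<Rightarrow> nat" and xstar :: "real^'n"
  assumes lu: "\<forall>i. l$i < u$i"
    and lu_int: "\<forall>i\<in>Iz. l$i \<in> \<int> \<and> u$i \<in> \<int>"
    and lip: "\<exists>L>0. \<forall>y z. (\<forall>i\<in>Iz. y$i = z$i) \<longrightarrow> \<bar>f y - f z\<bar> \<le> L * norm (y - z)"
    and run: "dfndfl_run f Iz l u \<gamma> \<delta> \<theta> s x xt xi ac Dk ta yp"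
    and sub: "strict_mono r" "\<forall>j. r j \<in> {k. xi (Suc k) < xi k}"
    and lim: "(x \<circ> r) \<longlonglongrightarrow> xstar"
    and xstar: "xstar \<in> boxX l u \<inter> intZ Iz"
  shows "\<forall>d\<in>Dz Iz l u xstar. f xstar \<le> f (xstar + d)"
proof -
  obtain L where L0: "L > 0" and L: "\<forall>y z. (\<forall>i\<in>Iz. y$i = z$i) \<longrightarrow> \<bar>f y - f z\<bar> \<le> L * norm (y - z)"
    using lip by blast
  note R = run[unfolded dfndfl_run_def]
  have g: "\<gamma> > 0" "0 < \<delta>" "\<delta> < 1" "0 < \<theta>" "\<theta> < 1" "xi 0 > 0" "x 0 \<in> boxX l u \<inter> intZ Iz"
    "ac 0 = 1" "Dk 0 \<subseteq> Dz Iz l u (x 0)"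
    using R by blast+
  have sk: "s k \<in> Dc Iz l u (x 0)" "norm (s k) = 1" for k using R by blast+
  define pa where "pa k = fst (PCS f l u \<gamma> \<delta> (ac k) (x k) (s k))" for k
  define pq where "pq k = snd (PCS f l u \<gamma> \<delta> (ac k) (x k) (s k))" for k
  define rr where "rr k d = DS f Iz l u (ta k d) (xt k) d (xi k)" for k d
  define cond where "cond k = (yp k = xt k \<and> (\<forall>d\<in>Dk k. ta k d = 1))" for k
  have P1: "(pa k = 0 \<longrightarrow> ac (Suc k) = \<theta> * ac k \<and> xt k = x k)
      \<and> (pa k \<noteq> 0 \<longrightarrow> ac (Suc k) = pa k \<and> xt k = proj l u (x k + pa k *\<^sub>R pq k))" for k
  proof -
    have "let (a, st) = PCS f l u \<gamma> \<delta> (ac k) (x k) (s k) in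
          (a = 0 \<longrightarrow> ac (Suc k) = \<theta> * ac k \<and> xt k = x k)
        \<and> (a \<noteq> 0 \<longrightarrow> ac (Suc k) = a \<and> xt k = proj l u (x k + a *\<^sub>R st))" using R by blast
    then show ?thesis unfolding pa_def pq_def by (simp add: Let_def split_beta)
  qed
  have P2A: "\<exists>ds. distinct ds \<and> set ds \<subseteq> Dk k \<and>
           ((ds \<noteq> [] \<and> rr k (last ds) \<noteq> 0 \<and> yp k = xt k + rr k (last ds) *\<^sub>R last ds)
              \<or> (set ds = Dk k \<and> (\<forall>d\<in>set ds. rr k d = 0) \<and> yp k = xt k))" for k
  proof -
    have "\<exists>ds. distinct ds \<and> set ds \<subseteq> Dk k \<and>
          (let q = (\<lambda>d. DS f Iz l u (ta k d) (xt k) d (xi k)) in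
             (\<forall>j. j + 1 < length ds \<longrightarrow> q (ds ! j) = 0)
           \<and> ((ds \<noteq> [] \<and> q (last ds) \<noteq> 0 \<and> yp k = xt k + q (last ds) *\<^sub>R last ds)
              \<or> (set ds = Dk k \<and> (\<forall>d\<in>set ds. q d = 0) \<and> yp k = xt k))
           \<and> (\<forall>d. ta (Suc k) d =
                 (if d \<in> set ds then (if q d = 0 then max 1 (of_int \<lfloor>ta k d / 2\<rfloor>) else q d)
                  else if d \<in> Dk (Suc k) - Dk k then 1 else ta k d)))" using R by blast
    then show ?thesis unfolding rr_def Let_def by blast
  qed
  have P2B: "(cond k \<longrightarrow> xi (Suc k) = \<theta> * xi k
                   \<and> (Dz Iz l u (xt k) \<subseteq> Dk k \<longrightarrow> Dk (Suc k) = Dk k)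
                   \<and> (\<not> Dz Iz l u (xt k) \<subseteq> Dk k \<longrightarrow>
                         Dk k \<subset> Dk (Suc k) \<and> Dk (Suc k) \<subseteq> Dz Iz l u (xt k)))
        \<and> (\<not> cond k \<longrightarrow> xi (Suc k) = xi k \<and> Dk (Suc k) = Dk k)" for k
  proof -
    have "let cond = (yp k = xt k \<and> (\<forall>d\<in>Dk k. ta k d = 1)) in
          (cond \<longrightarrow> xi (Suc k) = \<theta> * xi k
                   \<and> (Dz Iz l u (xt k) \<subseteq> Dk k \<longrightarrow> Dk (Suc k) = Dk k)
                   \<and> (\<not> Dz Iz l u (xt k) \<subseteq> Dk k \<longrightarrow>
                         Dk k \<subset> Dk (Suc k) \<and> Dk (Suc k) \<subseteq> Dz Iz l u (xt k)))
        \<and> (\<not> cond \<longrightarrow> xi (Suc k) = xi k \<and> Dk (Suc k) = Dk k)" using R by blast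
    then show ?thesis unfolding cond_def Let_def by blast
  qed
  have P3: "x (Suc k) \<in> boxX l u \<inter> intZ Iz" "f (x (Suc k)) \<le> f (yp k)" for k
    using R by blast+

  define M where "M = (\<Sum>i\<in>UNIV. u$i - l$i)"
  define F where "F = {d::real^'n. d \<noteq> 0 \<and> (\<forall>i. d$i \<in> {m::real. m \<in> \<int> \<and> \<bar>m\<bar> \<le> M})}"
  have finF: "finite F" unfolding F_def by (rule finite_F)
  have DzF: "w \<in> boxX l u \<Longrightarrow> Dz Iz l u w \<subseteq> F" for w unfolding F_def M_def by (rule Dz_sub_F)
  have sIz: "i \<in> Iz \<Longrightarrow> s k $ i = 0" for i k using sk(1)[of k] unfolding Dc_def by auto
  have pcsq: "PCS f l u \<gamma> \<delta> (ac k) (x k) (s k) = (pa k, pq k)" for k unfolding pa_def pq_def by simp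
  have pcs: "pa k = 0 \<or> (pa k > 0 \<and> (pq k = s k \<or> pq k = - s k) \<and> f (proj l u (x k + pa k *\<^sub>R pq k)) \<le> f (x k) - \<gamma> * (pa k)\<^sup>2)"
    if acp: "ac k > 0" and xk: "x k \<in> boxX l u \<inter> intZ Iz" for k
  proof -
    have bnd: "f (proj l u (x k + b *\<^sub>R q)) \<ge> f (x k) - L * M" if q: "\<forall>i\<in>Iz. q $ i = 0" for b q
    proof -
      have "\<forall>i\<in>Iz. (proj l u (x k + b *\<^sub>R q))$i = x k $ i" using proj_fix xk q by blast
      then have "\<bar>f (proj l u (x k + b *\<^sub>R q)) - f (x k)\<bar> \<le> L * norm (proj l u (x k + b *\<^sub>R q) - x k)"
        using L by blast
      also have "\<dots> \<le> L * M" unfolding M_def using proj_dist2 xk L0 by (intro mult_left_mono) auto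
      finally show ?thesis by linarith
    qed
    show ?thesis
    proof (rule PCS_prop[OF pcsq acp g(2) g(3) g(1), of "f (x k) - L * M"])
      show "\<forall>\<beta>. f (x k) - L * M \<le> f (proj l u (x k + \<beta> *\<^sub>R s k))"
        by (intro allI bnd) (simp add: sIz)
      show "\<forall>\<beta>. f (x k) - L * M \<le> f (proj l u (x k + \<beta> *\<^sub>R (- s k)))"
        by (intro allI bnd) (simp add: sIz)
    qed
  qed
  have xbox: "x k \<in> boxX l u \<inter> intZ Iz" for k
    by (cases k) (use g(7) P3 in auto)
  have acpos: "ac k > 0" for k
  proof (induction k)
    case 0 then show ?case using g(8) by simp
  next
    case (Suc k)
    then show ?case using P1[of k] pcs[OF Suc xbox[of k]] g(4) by auto
  qed
  have pcsk: "pa k = 0 \<or> (pa k > 0 \<and> (pq k = s k \<or> pq k = - s k) \<and> f (proj l u (x k + pa k *\<^sub>R pq k)) \<le> f (x k) - \<gamma> * (pa k)\<^sup>2)" for k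
    using pcs[OF acpos xbox] .
  have xtf: "xt k \<in> boxX l u \<inter> intZ Iz \<and> f (xt k) \<le> f (x k) - \<gamma> * (pa k)\<^sup>2 \<and> norm (xt k - x k) \<le> pa k \<and> pa k \<ge> 0" for k
  proof (cases "pa k = 0")
    case True
    then show ?thesis using P1[of k] xbox[of k] by auto
  next
    case False
    then have pk: "pa k > 0" "pq k = s k \<or> pq k = - s k" "f (proj l u (x k + pa k *\<^sub>R pq k)) \<le> f (x k) - \<gamma> * (pa k)\<^sup>2"
      using pcsk[of k] by auto
    have xt: "xt k = proj l u (x k + pa k *\<^sub>R pq k)" using P1[of k] False by auto
    have qz: "\<forall>i\<in>Iz. pq k $ i = 0" using pk(2) sIz by auto
    have "\<forall>i\<in>Iz. xt k $ i = x k $ i" using xbox[of k] qz by (simp add: xt proj_fix)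
    then have "xt k \<in> intZ Iz" using xbox[of k] unfolding intZ_def by auto
    moreover have "xt k \<in> boxX l u" using xt proj_box lu by auto
    moreover have "norm (xt k - x k) \<le> pa k"
    proof -
      have "norm (xt k - x k) \<le> norm (x k + pa k *\<^sub>R pq k - x k)" using proj_dist[of "x k" l u "x k + pa k *\<^sub>R pq k"] xbox[of k] xt by simp
      also have "\<dots> = pa k" using pk(1,2) sk(2)[of k] by auto
      finally show ?thesis .
    qed
    ultimately show ?thesis using pk xt by auto
  qed
  have xipos: "xi k > 0" for k
  proof (induction k)
    case 0 then show ?case using g(6) by simp
  next
    case (Suc k) then show ?case using P2B[of k] g(4) by (cases "cond k") auto
  qed
  have xidec: "xi (Suc k) \<le> xi k" for k
    using P2B[of k] g(4,5) xipos[of k] by (cases "cond k") (auto simp: mult_le_cancel_right1)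
  have fyp: "f (yp k) \<le> f (xt k)" for k
  proof -
    obtain ds where ds: "(ds \<noteq> [] \<and> rr k (last ds) \<noteq> 0 \<and> yp k = xt k + rr k (last ds) *\<^sub>R last ds)
              \<or> (set ds = Dk k \<and> (\<forall>d\<in>set ds. rr k d = 0) \<and> yp k = xt k)" using P2A[of k] by blast
    then show ?thesis
    proof
      assume a: "ds \<noteq> [] \<and> rr k (last ds) \<noteq> 0 \<and> yp k = xt k + rr k (last ds) *\<^sub>R last ds"
      then have "f (yp k) \<le> f (xt k) - xi k" using DS_dec[of f Iz l u "ta k (last ds)" "xt k" "last ds" "xi k"]
        unfolding rr_def by auto
      then show ?thesis using xipos[of k] by linarith
    qed auto
  qed
  have fdec: "f (x (Suc k)) \<le> f (x k)" for k
    using P3(2)[of k] fyp[of k] xtf[of k] g(1) by (smt (verit) mult_nonneg_nonneg zero_le_power2)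
  have Dsub: "Dk k \<subseteq> F \<and> Dk k \<subseteq> Dk (Suc k)" for k
  proof (induction k)
    case 0
    then show ?case using g(9) DzF[of "x 0"] g(7) P2B[of 0] by (cases "cond 0") auto
  next
    case (Suc k)
    have "Dk (Suc k) \<subseteq> F" using Suc DzF[of "xt k"] xtf[of k] P2B[of k] by (cases "cond k") auto
    then show ?case using P2B[of "Suc k"] by (cases "cond (Suc k)") auto
  qed
  have Hcond: "xi (Suc k) < xi k \<Longrightarrow> cond k" for k using P2B[of k] by auto
  have Hfail: "f (xt k + d) > f (xt k) - xi k"
    if H: "xi (Suc k) < xi k" and dD: "d \<in> Dk k" and dz: "d \<in> Dz Iz l u (xt k)" for k d
  proof -
    have c: "yp k = xt k" "\<forall>d\<in>Dk k. ta k d = 1" using Hcond[OF H] unfolding cond_def by auto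
    obtain ds where dss: "set ds \<subseteq> Dk k" and ds: "(ds \<noteq> [] \<and> rr k (last ds) \<noteq> 0 \<and> yp k = xt k + rr k (last ds) *\<^sub>R last ds)
              \<or> (set ds = Dk k \<and> (\<forall>d\<in>set ds. rr k d = 0) \<and> yp k = xt k)" using P2A[of k] by blast
    from ds show ?thesis
    proof
      assume a: "ds \<noteq> [] \<and> rr k (last ds) \<noteq> 0 \<and> yp k = xt k + rr k (last ds) *\<^sub>R last ds"
      then have "last ds = 0" using c(1) by auto
      moreover have "last ds \<in> F" using a dss Dsub[of k] last_in_set by blast
      ultimately show ?thesis unfolding F_def by simp
    next
      assume a: "set ds = Dk k \<and> (\<forall>d\<in>set ds. rr k d = 0) \<and> yp k = xt k"
      then have "DS f Iz l u 1 (xt k) d (xi k) = 0" using dD c(2) unfolding rr_def by auto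
      then show ?thesis
      proof (rule DS_fail)
        show "xt k + d \<in> boxX l u \<inter> intZ Iz" using dz unfolding Dz_def by auto
        show "bdd_above {a. 0 \<le> a \<and> xt k + a *\<^sub>R d \<in> boxX l u \<inter> intZ Iz}"
          using bdd_dir[of "xt k" l u d Iz] xtf[of k] Dz_nonzero[OF dz] by auto
      qed
    qed
  qed
  obtain K where K: "\<forall>k\<ge>K. Dk k = Dk K"
    using chain_const[of F Dk, OF finF] Dsub by blast
  have decxi: "decseq xi" using xidec by (rule decseq_SucI)
  have decf: "decseq (\<lambda>k. f (x k))" using fdec by (rule decseq_SucI)
  have rH: "xi (Suc (r j)) < xi (r j)" for j using sub(2) by auto
  have xib: "xi (r j) \<le> \<theta> ^ j * xi 0" for j
  proof (induction j)
    case 0 then show ?case using decseqD[OF decxi, of 0 "r 0"] by simp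
  next
    case (Suc j)
    have "Suc (r j) \<le> r (Suc j)" using sub(1) by (simp add: Suc_leI strict_mono_Suc_iff)
    then have "xi (r (Suc j)) \<le> xi (Suc (r j))" using decseqD[OF decxi] by blast
    also have "\<dots> = \<theta> * xi (r j)" using P2B[of "r j"] Hcond[OF rH[of j]] by auto
    also have "\<dots> \<le> \<theta> * (\<theta> ^ j * xi 0)" using Suc g(4) by (simp add: mult_left_mono)
    finally show ?case by simp
  qed
  have xilim: "(\<lambda>j. xi (r j)) \<longlonglongrightarrow> 0"
  proof (rule Lim_null_comparison)
    show "eventually (\<lambda>j. norm (xi (r j)) \<le> \<theta> ^ j * xi 0) sequentially"
      using xib xipos by (auto simp: less_imp_le)
    have "(\<lambda>j. \<theta> ^ j) \<longlonglongrightarrow> 0" using g(4,5) by (intro LIMSEQ_power_zero) auto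
    then show "(\<lambda>j. \<theta> ^ j * xi 0) \<longlonglongrightarrow> 0" by (simp add: tendsto_mult_left_zero)
  qed
  have xlim: "(\<lambda>j. x (r j)) \<longlonglongrightarrow> xstar" using lim by (simp add: comp_def)
  have xeq: "eventually (\<lambda>j. \<forall>i\<in>Iz. x (r j) $ i = xstar $ i) sequentially"
    using int_eventually_eq[OF xlim _ ] xbox xstar by blast
  have fxlim: "(\<lambda>j. f (x (r j))) \<longlonglongrightarrow> f xstar" by (rule lip_conv[OF L xlim xeq])
  have fge: "f xstar \<le> f (x k)" for k
  proof (rule LIMSEQ_le_const2[OF fxlim])
    show "\<exists>N. \<forall>n\<ge>N. f (x (r n)) \<le> f (x k)"
    proof (intro exI allI impI)
      fix n assume "k \<le> n"
      then have "k \<le> r n" using seq_suble[OF sub(1), of n] by linarith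
      then show "f (x (r n)) \<le> f (x k)" using decseqD[OF decf] by blast
    qed
  qed
  have pab: "pa (r j) \<le> sqrt ((f (x (r j)) - f xstar) / \<gamma>)" for j
  proof (rule real_le_rsqrt)
    have "\<gamma> * (pa (r j))\<^sup>2 \<le> f (x (r j)) - f xstar"
      using xtf[of "r j"] fyp[of "r j"] P3(2)[of "r j"] fge[of "Suc (r j)"] by linarith
    then show "(pa (r j))\<^sup>2 \<le> (f (x (r j)) - f xstar) / \<gamma>" using g(1) by (simp add: field_simps)
  qed
  have tlim: "(\<lambda>j. xt (r j)) \<longlonglongrightarrow> xstar"
  proof -
    have "(\<lambda>j. xt (r j) - xstar) \<longlonglongrightarrow> 0"
    proof (rule Lim_null_comparison)
      show "eventually (\<lambda>j. norm (xt (r j) - xstar) \<le> sqrt ((f (x (r j)) - f xstar) / \<gamma>) + norm (x (r j) - xstar)) sequentially"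
      proof (rule always_eventually, rule allI)
        fix j
        have "norm (xt (r j) - xstar) \<le> norm (xt (r j) - x (r j)) + norm (x (r j) - xstar)"
          using norm_triangle_ineq[of "xt (r j) - x (r j)" "x (r j) - xstar"] by simp
        then show "norm (xt (r j) - xstar) \<le> sqrt ((f (x (r j)) - f xstar) / \<gamma>) + norm (x (r j) - xstar)"
          using xtf[of "r j"] pab[of j] by linarith
      qed
      have "(\<lambda>j. (f (x (r j)) - f xstar) / \<gamma>) \<longlonglongrightarrow> 0"
        by (intro tendsto_divide_zero LIM_zero fxlim)
      then have "(\<lambda>j. sqrt ((f (x (r j)) - f xstar) / \<gamma>)) \<longlonglongrightarrow> 0"
        using tendsto_real_sqrt by fastforce
      moreover have "(\<lambda>j. norm (x (r j) - xstar)) \<longlonglongrightarrow> 0"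
        using xlim by (simp add: LIM_zero tendsto_norm_zero)
      ultimately show "(\<lambda>j. sqrt ((f (x (r j)) - f xstar) / \<gamma>) + norm (x (r j) - xstar)) \<longlonglongrightarrow> 0"
        using tendsto_add_zero by blast
    qed
    then show ?thesis by (rule LIM_zero_cancel)
  qed
  have teq: "eventually (\<lambda>j. \<forall>i\<in>Iz. xt (r j) $ i = xstar $ i) sequentially"
    using int_eventually_eq[OF tlim _ ] xtf xstar by blast
  show ?thesis
  proof
    fix d assume d: "d \<in> Dz Iz l u xstar"
    have ev: "eventually (\<lambda>j. f (xt (r j)) - xi (r j) \<le> f (xt (r j) + d)) sequentially"
      using teq eventually_ge_at_top[of K]
    proof eventually_elim
      case (elim j)
      define k where "k = r j"
      have kK: "k \<ge> K" using elim(2) seq_suble[OF sub(1), of j] unfolding k_def by linarith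
      have eqk: "\<forall>i\<in>Iz. xt k $ i = xstar $ i" using elim(1) unfolding k_def by simp
      have dz: "d \<in> Dz Iz l u (xt k)"
      proof -
        have d0: "\<forall>i. i \<notin> Iz \<longrightarrow> d$i = 0" "primitive_on Iz d" "xstar + d \<in> boxX l u \<inter> intZ Iz"
          using d unfolding Dz_def by auto
        have "xt k + d \<in> boxX l u"
          unfolding boxX_def
        proof (intro CollectI allI)
          fix i
          show "l $ i \<le> (xt k + d) $ i \<and> (xt k + d) $ i \<le> u $ i"
          proof (cases "i \<in> Iz")
            case True then show ?thesis using eqk d0(3) unfolding boxX_def by auto
          next
            case False then show ?thesis using d0(1) xtf[of k] unfolding boxX_def by auto
          qed
        qed
        moreover have "xt k + d \<in> intZ Iz" using eqk d0(3) unfolding intZ_def by auto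
        ultimately show ?thesis using d0 unfolding Dz_def by auto
      qed
      have dD: "d \<in> Dk k"
      proof (rule ccontr)
        assume nd: "d \<notin> Dk k"
        then have "\<not> Dz Iz l u (xt k) \<subseteq> Dk k" using dz by auto
        then have "Dk k \<subset> Dk (Suc k)" using P2B[of k] Hcond[OF rH[of j]] unfolding k_def by auto
        moreover have "Dk (Suc k) = Dk k" using K kK by (metis le_SucI)
        ultimately show False by simp
      qed
      show ?case using Hfail[OF rH[of j] dD[unfolded k_def] dz[unfolded k_def]] by simp
    qed
    have l1: "(\<lambda>j. f (xt (r j) + d)) \<longlonglongrightarrow> f (xstar + d)"
    proof (rule lip_conv[OF L])
      show "(\<lambda>j. xt (r j) + d) \<longlonglongrightarrow> xstar + d" using tlim by (intro tendsto_add) auto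
      show "eventually (\<lambda>j. \<forall>i\<in>Iz. (xt (r j) + d) $ i = (xstar + d) $ i) sequentially"
        using teq by eventually_elim auto
    qed
    have l2: "(\<lambda>j. f (xt (r j)) - xi (r j)) \<longlonglongrightarrow> f xstar - 0"
      by (intro tendsto_diff lip_conv[OF L tlim teq] xilim)
    have "f xstar - 0 \<le> f (xstar + d)"
      by (rule tendsto_le[OF trivial_limit_sequentially l1 l2 ev])
    then show "f xstar \<le> f (xstar + d)" by simp
  qed
qed

end
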